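(* Let $q$ be a prime power, $k\ge1$ and $n\ge k+2$. There does not exist a Cameron-Liebler $k$-set of $\mathrm{AG}(n,q)$ with parameter $x=2$.
   Context: $\mathrm{AG}(n,q)$ is $\mathrm{PG}(n,q)$ with a hyperplane $\pi_\infty$ removed; affine points are points outside $\pi_\infty$, affine $k$-spaces are $k$-dimensional projective subspaces not contained in $\pi_\infty$. With $A_n$ the incidence matrix of affine points versus affine $k$-spaces, a set $\mathcal{L}$ of affine $k$-spaces is a Cameron-Liebler $k$-set of $\mathrm{AG}(n,q)$ if its characteristic vector lies in the real row space $\mathrm{Im}(A_n^T)$; its parameter is $|\mathcal{L}|/\left[{n\atop k}\right]_q$, where $\left[{a\atop b}\right]_q=\frac{(q^a-1)\cdots(q^{a-b+1}-1)}{(q^b-1)\cdots(q-1)}$. *)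

theory Defs
  imports "HOL-Analysis.Analysis"
begin

text \<open>Model of AG(n,q): the vector space 'a^'n over a finite field 'a with CARD('a) = q
  and CARD('n) = n.  Affine k-spaces are translates of k-dimensional linear subspaces.\<close>

definition affine_kspaces :: "nat \<Rightarrow> ('a::{field,finite} ^ 'n) set set" where
  "affine_kspaces k = {S. \<exists>v W. vec.subspace W \<and> vec.dim W = k \<and> S = (\<lambda>w. v + w) ` W}"

text \<open>Incidence matrix A_n: rows = affine points, columns = affine k-spaces.\<close>
definition incid :: "('a::{field,finite} ^ 'n) \<Rightarrow> ('a ^ 'n) set \<Rightarrow> real" where
  "incid P S = (if P \<in> S then 1 else 0)"

text \<open>Characteristic vector of L lies in the real row space Im(A_n^T) of A_n.\<close>
definition cameron_liebler_kset :: "nat \<Rightarrow> ('a::{field,finite} ^ 'n) set set \<Rightarrow> bool" where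
  "cameron_liebler_kset k L \<longleftrightarrow> L \<subseteq> affine_kspaces k \<and>
     (\<exists>c :: ('a ^ 'n) \<Rightarrow> real. \<forall>S \<in> affine_kspaces k.
        (if S \<in> L then 1 else 0) = (\<Sum>P\<in>UNIV. c P * incid P S))"

definition gauss_binom :: "nat \<Rightarrow> nat \<Rightarrow> nat \<Rightarrow> real" where
  "gauss_binom q a b = (\<Prod>i<b. (real q ^ (a - i) - 1) / (real q ^ (i + 1) - 1))"

definition cl_parameter :: "nat \<Rightarrow> ('a::{field,finite} ^ 'n) set set \<Rightarrow> real" where
  "cl_parameter k L = real (card L) / gauss_binom CARD('a) CARD('n) k"

end

theory Submission
  imports Defs
begin

lemma card_span_indep:
  fixes B :: "('a::{field,finite}^'n) set"
  assumes "vec.independent B"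
  shows "card (vec.span B) = CARD('a) ^ card B"
proof -
  have "finite B" by simp
  then show ?thesis using assms
  proof (induction B rule: finite_induct)
    case empty
    then show ?case by simp
  next
    case (insert x F)
    have indF: "vec.independent F" and xF: "x \<notin> vec.span F"
      using insert.prems insert.hyps by (auto simp: vec.independent_insert)
    have eq: "vec.span (insert x F) = (\<lambda>(t,y). t *s x + y) ` (UNIV \<times> vec.span F)"
    proof
      show "vec.span (insert x F) \<subseteq> (\<lambda>(t,y). t *s x + y) ` (UNIV \<times> vec.span F)"
      proof
        fix z assume "z \<in> vec.span (insert x F)"
        then obtain t where "z - t *s x \<in> vec.span F" by (auto simp: vec.span_insert)
        then show "z \<in> (\<lambda>(t,y). t *s x + y) ` (UNIV \<times> vec.span F)"
          by (intro image_eqI[of _ _ "(t, z - t *s x)"]) auto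
      qed
    next
      show "(\<lambda>(t,y). t *s x + y) ` (UNIV \<times> vec.span F) \<subseteq> vec.span (insert x F)"
        unfolding vec.span_insert by clarsimp (metis add_diff_cancel_left')
    qed
    have inj: "inj_on (\<lambda>(t,y). t *s x + y) (UNIV \<times> vec.span F)"
    proof (rule inj_onI, clarsimp)
      fix t y t' y'
      assume y: "y \<in> vec.span F" and y': "y' \<in> vec.span F" and e: "t *s x + y = t' *s x + y'"
      show "t = t' \<and> y = y'"
      proof (cases "t = t'")
        case True then show ?thesis using e by simp
      next
        case False
        have "(t - t') *s x = y' - y" using e by (simp add: algebra_simps vector_sub_rdistrib)
        have "x = (1 / (t - t')) *s ((t - t') *s x)" using False by (simp only: vec.scale_scale) simp
        also have "\<dots> = (1 / (t - t')) *s (y' - y)" using \<open>(t - t') *s x = y' - y\<close> by simp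
        also have "\<dots> \<in> vec.span F" using y y' by (intro vec.span_scale vec.span_diff)
        finally show ?thesis using xF by simp
      qed
    qed
    have "card (vec.span (insert x F)) = card (UNIV :: 'a set) * card (vec.span F)"
      unfolding eq by (subst card_image[OF inj]) (simp add: card_cartesian_product)
    then show ?case using insert indF by simp
  qed
qed

lemma card_subspace:
  fixes W :: "('a::{field,finite}^'n) set"
  assumes "vec.subspace W"
  shows "card W = CARD('a) ^ vec.dim W"
proof -
  obtain B where B: "B \<subseteq> W" "vec.independent B" "W \<subseteq> vec.span B" "card B = vec.dim W"
    using vec.basis_exists by blast
  have "vec.span B = W" using B assms vec.span_minimal by blast
  then show ?thesis using card_span_indep[OF B(2)] B(4) by simp
qed

definition IL :: "('a::{field,finite}^'n) set \<Rightarrow> nat \<Rightarrow> ('a^'n) list set" where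
  "IL W i = {xs. length xs = i \<and> set xs \<subseteq> W \<and> distinct xs \<and> vec.independent (set xs)}"

lemma finite_IL: "finite (IL W i)"
proof -
  have "IL W i \<subseteq> {xs. set xs \<subseteq> UNIV \<and> length xs = i}" by (auto simp: IL_def)
  moreover have "finite {xs. set xs \<subseteq> (UNIV :: ('a^'n) set) \<and> length xs = i}"
    by (rule finite_lists_length_eq) simp
  ultimately show ?thesis by (rule finite_subset)
qed

lemma card_IL:
  fixes W :: "('a::{field,finite}^'n) set"
  assumes W: "vec.subspace W"
  shows "card (IL W i) = (\<Prod>j<i. CARD('a) ^ vec.dim W - CARD('a) ^ j)"
proof (induction i)
  case 0
  have "IL W 0 = {[]}" by (auto simp: IL_def vec.independent_empty)
  then show ?case by simp
next
  case (Suc i)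
  have eq: "IL W (Suc i) = (\<Union>xs\<in>IL W i. (\<lambda>v. v # xs) ` (W - vec.span (set xs)))"
  proof
    show "IL W (Suc i) \<subseteq> (\<Union>xs\<in>IL W i. (\<lambda>v. v # xs) ` (W - vec.span (set xs)))"
    proof
      fix ys assume ys: "ys \<in> IL W (Suc i)"
      then obtain v xs where ys_eq: "ys = v # xs" by (cases ys) (auto simp: IL_def)
      have "xs \<in> IL W i" using ys ys_eq vec.independent_mono[of "set ys" "set xs"]
        by (auto simp: IL_def)
      moreover have "v \<in> W - vec.span (set xs)"
        using ys ys_eq by (auto simp: IL_def vec.independent_insert)
      ultimately show "ys \<in> (\<Union>xs\<in>IL W i. (\<lambda>v. v # xs) ` (W - vec.span (set xs)))"
        using ys_eq by blast
    qed
  next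
    show "(\<Union>xs\<in>IL W i. (\<lambda>v. v # xs) ` (W - vec.span (set xs))) \<subseteq> IL W (Suc i)"
    proof clarify
      fix xs v assume xs: "xs \<in> IL W i" and v: "v \<in> W" "v \<notin> vec.span (set xs)"
      have "v \<notin> set xs" using v(2) vec.span_base by blast
      then show "v # xs \<in> IL W (Suc i)"
        using xs v by (auto simp: IL_def vec.independent_insert)
    qed
  qed
  have cardeach: "card ((\<lambda>v. v # xs) ` (W - vec.span (set xs))) = CARD('a) ^ vec.dim W - CARD('a) ^ i"
    if xs: "xs \<in> IL W i" for xs
  proof -
    have "card ((\<lambda>v. v # xs) ` (W - vec.span (set xs))) = card (W - vec.span (set xs))"
      by (rule card_image) (auto simp: inj_on_def)
    also have "\<dots> = card W - card (vec.span (set xs))"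
      using xs W by (intro card_Diff_subset) (auto simp: IL_def, meson subsetD vec.span_minimal)
    also have "card (vec.span (set xs)) = CARD('a) ^ i"
      using xs card_span_indep[of "set xs"] by (auto simp: IL_def distinct_card)
    finally show ?thesis using card_subspace[OF W] by simp
  qed
  have "card (IL W (Suc i)) = (\<Sum>xs\<in>IL W i. card ((\<lambda>v. v # xs) ` (W - vec.span (set xs))))"
    unfolding eq by (rule card_UN_disjoint) (auto simp: finite_IL)
  also have "\<dots> = (\<Sum>xs\<in>IL W i. CARD('a) ^ vec.dim W - CARD('a) ^ i)"
    by (rule sum.cong) (auto simp: cardeach)
  also have "\<dots> = card (IL W i) * (CARD('a) ^ vec.dim W - CARD('a) ^ i)" by simp
  finally show ?case using Suc.IH by simp
qed

lemma dim_UNIV_vec: "vec.dim (UNIV :: ('a::field^'n) set) = CARD('n)"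
  by (simp add: card_cart_basis)

definition Sub :: "nat \<Rightarrow> ('a::{field,finite}^'n) set set" where
  "Sub k = {W. vec.subspace W \<and> vec.dim W = k}"

lemma count_Sub:
  "card (Sub k :: ('a::{field,finite}^'n) set set) * (\<Prod>j<k. CARD('a) ^ k - CARD('a) ^ j)
     = (\<Prod>j<k. CARD('a) ^ CARD('n) - CARD('a) ^ j)"
proof -
  have eq: "IL (UNIV :: ('a^'n) set) k = (\<Union>W\<in>Sub k. IL W k)"
  proof
    show "IL (UNIV :: ('a^'n) set) k \<subseteq> (\<Union>W\<in>Sub k. IL W k)"
    proof
      fix xs assume xs: "xs \<in> IL (UNIV :: ('a^'n) set) k"
      then have "vec.span (set xs) \<in> Sub k"
        by (auto simp: IL_def Sub_def vec.dim_eq_card_independent distinct_card)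
      moreover have "xs \<in> IL (vec.span (set xs)) k" using xs vec.span_superset
        by (auto simp: IL_def)
      ultimately show "xs \<in> (\<Union>W\<in>Sub k. IL W k)" by blast
    qed
  qed (auto simp: IL_def)
  have uniq: "W = vec.span (set xs)" if "W \<in> Sub k" "xs \<in> IL W k" for W xs
  proof -
    have "vec.span (set xs) \<subseteq> W" using that by (auto simp: IL_def Sub_def, meson subsetD vec.span_minimal)
    moreover have "vec.dim (vec.span (set xs)) = k" using that
      by (auto simp: IL_def vec.dim_eq_card_independent distinct_card)
    ultimately show ?thesis using that vec.subspace_dim_equal[of "vec.span (set xs)" W]
      by (auto simp: Sub_def)
  qed
  have "card (IL (UNIV :: ('a^'n) set) k) = (\<Sum>W\<in>(Sub k :: ('a^'n) set set). card (IL W k))"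
    unfolding eq
    apply (rule card_UN_disjoint[of "Sub k" "\<lambda>W. IL W k"])
    using uniq by (auto simp: finite_IL)
  also have "\<dots> = (\<Sum>W\<in>(Sub k :: ('a^'n) set set). (\<Prod>j<k. CARD('a) ^ k - CARD('a) ^ j))"
    by (rule sum.cong) (auto simp: card_IL Sub_def)
  finally show ?thesis using card_IL[of "UNIV :: ('a^'n) set" k] dim_UNIV_vec[where 'a='a and 'n='n]
    by (simp add: mult.commute)
qed

lemma card_field_ge2: "CARD('a::{field,finite}) \<ge> 2"
proof -
  have "card {0::'a, 1} \<le> CARD('a)" by (rule card_mono) auto
  then show ?thesis by simp
qed

lemma prod_split_pow:
  fixes q :: real
  assumes "k \<le> m"
  shows "(\<Prod>j<k. q ^ m - q ^ j) = (\<Prod>j<k. q ^ j) * (\<Prod>j<k. q ^ (m - j) - 1)"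
proof -
  have "(\<Prod>j<k. q ^ m - q ^ j) = (\<Prod>j<k. q ^ j * (q ^ (m - j) - 1))"
  proof (rule prod.cong)
    fix j assume "j \<in> {..<k}"
    then have "m = j + (m - j)" using assms by simp
    then have "q ^ m = q ^ j * q ^ (m - j)" by (metis power_add)
    then show "q ^ m - q ^ j = q ^ j * (q ^ (m - j) - 1)" by (simp add: algebra_simps)
  qed simp
  then show ?thesis by (simp add: prod.distrib)
qed

lemma card_Sub_gauss:
  assumes "k \<le> CARD('n)"
  shows "real (card (Sub k :: ('a::{field,finite}^'n) set set)) = gauss_binom CARD('a) CARD('n) k"
proof -
  let ?q = "real CARD('a)"
  let ?n = "CARD('n)"
  have q2: "?q \<ge> 2" using card_field_ge2[where 'a='a] by linarith
  have conv: "real (\<Prod>j<k. CARD('a) ^ m - CARD('a) ^ j) = (\<Prod>j<k. ?q ^ m - ?q ^ j)" if "k \<le> m" for m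
    unfolding of_nat_prod
  proof (rule prod.cong)
    fix j assume "j \<in> {..<k}"
    then have "CARD('a) ^ j \<le> CARD('a) ^ m" using that card_field_ge2[where 'a='a]
      by (intro power_increasing) auto
    then show "real (CARD('a) ^ m - CARD('a) ^ j) = ?q ^ m - ?q ^ j" by (simp add: of_nat_diff)
  qed simp
  have main: "real (card (Sub k :: ('a^'n) set set)) * (\<Prod>j<k. ?q ^ k - ?q ^ j) = (\<Prod>j<k. ?q ^ ?n - ?q ^ j)"
    using arg_cong[OF count_Sub[where k=k and 'a='a and 'n='n], of real]
    unfolding of_nat_mult conv[OF order_refl] conv[OF assms] .
  have pos: "(\<Prod>j<k. ?q ^ j) \<noteq> 0" using q2 by (auto simp: prod_zero_iff)
  have rev: "(\<Prod>j<k. ?q ^ (k - j) - 1) = (\<Prod>i<k. ?q ^ (i + 1) - 1)"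
  proof -
    have "(\<Prod>j<k. ?q ^ (k - j) - 1) = (\<Prod>j<k. (\<lambda>i. ?q ^ (i + 1) - 1) (k - Suc j))"
      by (rule prod.cong) (auto simp: Suc_diff_Suc)
    then show ?thesis using prod.nat_diff_reindex[of "\<lambda>i. ?q ^ (i + 1) - 1" k] by simp
  qed
  have nz: "(\<Prod>i<k. ?q ^ (i + 1) - 1) \<noteq> 0"
  proof -
    have "?q ^ (i + 1) - 1 > 0" for i
    proof -
      have "?q ^ (i + 1) \<ge> ?q" using q2 by (metis le_add2 one_le_numeral order_trans power_increasing power_one_right plus_1_eq_Suc)
      then show ?thesis using q2 by linarith
    qed
    then show ?thesis by (auto simp: prod_zero_iff) (metis less_irrefl)
  qed
  have "real (card (Sub k :: ('a^'n) set set)) * (\<Prod>i<k. ?q ^ (i + 1) - 1) = (\<Prod>j<k. ?q ^ (?n - j) - 1)"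
    using main unfolding prod_split_pow[OF order_refl] prod_split_pow[OF assms] rev
    using pos by simp
  then have "real (card (Sub k :: ('a^'n) set set)) = (\<Prod>j<k. ?q ^ (?n - j) - 1) / (\<Prod>i<k. ?q ^ (i + 1) - 1)"
    using nz by (simp add: field_simps)
  also have "\<dots> = gauss_binom CARD('a) ?n k"
    unfolding gauss_binom_def by (simp add: prod_dividef)
  finally show ?thesis .
qed


definition coset :: "('a::{field,finite}^'n) \<Rightarrow> ('a^'n) set \<Rightarrow> ('a^'n) set" where
  "coset v X = (\<lambda>w. v + w) ` X"

definition cosets :: "('a::{field,finite}^'n) set \<Rightarrow> ('a^'n) set set" where
  "cosets W = range (\<lambda>v. coset v W)"

lemma coset_self: "vec.subspace W \<Longrightarrow> v \<in> coset v W"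
  unfolding coset_def using vec.subspace_0 by force

lemma coset_subset_iff:
  assumes "vec.subspace W" "vec.subspace X" "W \<subseteq> X"
  shows "coset v W \<subseteq> coset u X \<longleftrightarrow> v - u \<in> X"
proof
  assume "coset v W \<subseteq> coset u X"
  then have "v \<in> coset u X" using coset_self[OF assms(1)] by blast
  then show "v - u \<in> X" unfolding coset_def by auto
next
  assume h: "v - u \<in> X"
  show "coset v W \<subseteq> coset u X"
  proof
    fix z assume "z \<in> coset v W"
    then obtain w where w: "w \<in> W" "z = v + w" unfolding coset_def by auto
    have "(v - u) + w \<in> X" using h w assms vec.subspace_add by blast
    moreover have "z = u + ((v - u) + w)" using w by simp
    ultimately show "z \<in> coset u X" unfolding coset_def by blast
  qed
qed

lemma coset_eq_iff:
  assumes "vec.subspace W"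
  shows "coset v W = coset u W \<longleftrightarrow> v - u \<in> W"
proof -
  have "v - u \<in> W \<longleftrightarrow> u - v \<in> W"
    using vec.subspace_neg[OF assms] by (metis minus_diff_eq)
  then show ?thesis using coset_subset_iff[OF assms assms order_refl] by blast
qed

lemma coset_dir_unique:
  assumes "vec.subspace W" "vec.subspace W'" "coset u W = coset v W'"
  shows "W = W'"
proof -
  have *: "A \<subseteq> B" if A: "vec.subspace A" and B: "vec.subspace B" and e: "coset u A = coset v B" for A B u v
  proof
    fix w assume w: "w \<in> A"
    have "u \<in> coset v B" using e coset_self[OF A] by blast
    then have 1: "u - v \<in> B" unfolding coset_def by auto
    have "u + w \<in> coset v B" using e w unfolding coset_def by blast
    then have 2: "u + w - v \<in> B" unfolding coset_def by auto
    have "w = (u + w - v) - (u - v)" by simp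
    then show "w \<in> B" using 1 2 vec.subspace_diff[OF B] by metis
  qed
  show ?thesis using *[OF assms] *[OF assms(2,1) assms(3)[symmetric]] by blast
qed

lemma cosets_disjoint:
  assumes "vec.subspace W" "C \<in> cosets W" "C' \<in> cosets W" "C \<noteq> C'"
  shows "C \<inter> C' = {}"
proof (rule ccontr)
  assume "C \<inter> C' \<noteq> {}"
  then obtain z where z: "z \<in> C" "z \<in> C'" by blast
  obtain u v where C: "C = coset u W" and C': "C' = coset v W" using assms unfolding cosets_def by auto
  have "z - u \<in> W" using z(1) unfolding C coset_def by auto
  then have 1: "coset z W = C" unfolding C using coset_eq_iff[OF assms(1)] by blast
  have "z - v \<in> W" using z(2) unfolding C' coset_def by auto
  then have 2: "coset z W = C'" unfolding C' using coset_eq_iff[OF assms(1)] by blast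
  show False using 1 2 assms(4) by simp
qed

lemma coset_union:
  assumes "vec.subspace W" "vec.subspace X" "W \<subseteq> X"
  shows "coset u X = \<Union>{C\<in>cosets W. C \<subseteq> coset u X}"
proof
  show "coset u X \<subseteq> \<Union>{C\<in>cosets W. C \<subseteq> coset u X}"
  proof
    fix z assume z: "z \<in> coset u X"
    then have "z - u \<in> X" unfolding coset_def by auto
    then have "coset z W \<subseteq> coset u X" using coset_subset_iff[OF assms] by blast
    then show "z \<in> \<Union>{C\<in>cosets W. C \<subseteq> coset u X}"
      using coset_self[OF assms(1)] unfolding cosets_def by blast
  qed
qed blast

lemma coset_in_affine: "W \<in> Sub k \<Longrightarrow> coset v W \<in> affine_kspaces k"
  unfolding Sub_def affine_kspaces_def coset_def by (intro CollectI exI[of _ v] exI[of _ W]) simp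

lemma affine_cosets: "S \<in> affine_kspaces k \<Longrightarrow> \<exists>W\<in>Sub k. S \<in> cosets W"
proof -
  assume "S \<in> affine_kspaces k"
  then obtain v W where "vec.subspace W" "vec.dim W = k" "S = coset v W"
    unfolding affine_kspaces_def coset_def by auto
  then show ?thesis unfolding Sub_def cosets_def by auto
qed

lemma sum_incid: "(\<Sum>P\<in>UNIV. c P * incid P S) = (\<Sum>P\<in>S. c P)"
  unfolding incid_def by (simp add: if_distrib sum.If_cases)

definition LW :: "('a^'n) set set \<Rightarrow> ('a::{field,finite}^'n) set \<Rightarrow> ('a^'n) set set" where
  "LW L W = {C\<in>cosets W. C \<in> L}"

context
  fixes k :: nat and L :: "('a::{field,finite}^'n) set set" and c :: "'a^'n \<Rightarrow> real"
  assumes CL: "\<And>S. S \<in> affine_kspaces k \<Longrightarrow> (if S \<in> L then 1 else 0) = (\<Sum>P\<in>S. c P)"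
begin

lemma sigma_count:
  assumes W: "W \<in> Sub k" and X: "vec.subspace X" "W \<subseteq> X"
  shows "(\<Sum>P\<in>coset u X. c P) = real (card {C\<in>cosets W. C \<in> L \<and> C \<subseteq> coset u X})"
proof -
  have Ws: "vec.subspace W" using W by (simp add: Sub_def)
  let ?D = "{C\<in>cosets W. C \<subseteq> coset u X}"
  have "(\<Sum>P\<in>coset u X. c P) = (\<Sum>P\<in>\<Union>?D. c P)"
    using coset_union[OF Ws X] by simp
  also have "\<dots> = (\<Sum>C\<in>?D. (\<Sum>P\<in>C. c P))"
  proof -
    have p1: "\<forall>A\<in>?D. finite A" by simp
    have p2: "\<forall>A\<in>?D. \<forall>B\<in>?D. A \<noteq> B \<longrightarrow> A \<inter> B = {}"
      using cosets_disjoint[OF Ws] by blast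
    show ?thesis using sum.Union_disjoint[OF p1 p2, of c] by (simp add: comp_def)
  qed
  also have "\<dots> = (\<Sum>C\<in>?D. (if C \<in> L then 1 else 0))"
  proof (rule sum.cong)
    fix C assume "C \<in> ?D"
    then have "C \<in> affine_kspaces k" using coset_in_affine[OF W] unfolding cosets_def by auto
    then show "(\<Sum>P\<in>C. c P) = (if C \<in> L then 1 else 0)" by (rule CL[symmetric])
  qed simp
  also have "\<dots> = (\<Sum>C\<in>{C\<in>?D. C \<in> L}. (1::real))"
    by (rule sum.inter_filter[symmetric]) simp
  also have "\<dots> = real (card {C\<in>?D. C \<in> L})" by simp
  also have "{C\<in>?D. C \<in> L} = {C\<in>cosets W. C \<in> L \<and> C \<subseteq> coset u X}" by blast
  finally show ?thesis .
qed

lemma card_LW: "W \<in> Sub k \<Longrightarrow> real (card (LW L W)) = (\<Sum>P\<in>UNIV. c P)"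
proof -
  assume W: "W \<in> Sub k"
  have "coset 0 UNIV = (UNIV :: ('a^'n) set)" unfolding coset_def by simp
  moreover have "(\<Sum>P\<in>coset 0 UNIV. c P) = real (card {C\<in>cosets W. C \<in> L \<and> C \<subseteq> coset 0 UNIV})"
    by (rule sigma_count[OF W]) auto
  moreover have "{C\<in>cosets W. C \<in> L \<and> C \<subseteq> coset 0 UNIV} = LW L W" unfolding LW_def using \<open>coset 0 UNIV = UNIV\<close> by auto
  ultimately show ?thesis by simp
qed

lemma card_L:
  assumes "L \<subseteq> affine_kspaces k"
  shows "real (card L) = (\<Sum>P\<in>UNIV. c P) * real (card (Sub k :: ('a^'n) set set))"
proof -
  have eq: "L = (\<Union>W\<in>(Sub k :: ('a^'n) set set). LW L W)"
  proof
    show "L \<subseteq> (\<Union>W\<in>(Sub k :: ('a^'n) set set). LW L W)"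
    proof
      fix S assume "S \<in> L"
      then obtain W where "W \<in> Sub k" "S \<in> cosets W" using assms affine_cosets by blast
      then show "S \<in> (\<Union>W\<in>(Sub k :: ('a^'n) set set). LW L W)" using \<open>S \<in> L\<close> unfolding LW_def by blast
    qed
  qed (auto simp: LW_def)
  have "card (\<Union>W\<in>(Sub k :: ('a^'n) set set). LW L W) = (\<Sum>W\<in>(Sub k :: ('a^'n) set set). card (LW L W))"
  proof (rule card_UN_disjoint)
    show "\<forall>W\<in>(Sub k :: ('a^'n) set set). \<forall>W'\<in>Sub k. W \<noteq> W' \<longrightarrow> LW L W \<inter> LW L W' = {}"
    proof (intro ballI impI)
      fix W W' :: "('a^'n) set" assume W: "W \<in> Sub k" and W': "W' \<in> Sub k" and ne: "W \<noteq> W'"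
      show "LW L W \<inter> LW L W' = {}"
      proof (rule ccontr)
        assume "LW L W \<inter> LW L W' \<noteq> {}"
        then obtain u v where "coset u W = coset v W'" unfolding LW_def cosets_def by auto
        moreover have "vec.subspace W" "vec.subspace W'" using W W' by (auto simp: Sub_def)
        ultimately show False using coset_dir_unique[of W W' u v] ne by blast
      qed
    qed
  qed simp_all
  moreover from eq have "card L = card (\<Union>W\<in>(Sub k :: ('a^'n) set set). LW L W)" by (rule arg_cong)
  ultimately have "real (card L) = (\<Sum>W\<in>(Sub k :: ('a^'n) set set). real (card (LW L W)))" by (simp only: of_nat_sum)
  also have "\<dots> = (\<Sum>W\<in>(Sub k :: ('a^'n) set set). (\<Sum>P\<in>UNIV. c P))"
    by (rule sum.cong) (auto simp: card_LW)
  finally show ?thesis by simp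
qed

end


lemma dim_insert_subspace:
  fixes W :: "('a::{field,finite}^'n) set"
  assumes "vec.subspace W" "d \<notin> W"
  shows "vec.dim (vec.span (insert d W)) = vec.dim W + 1"
proof -
  have "vec.span W = W" using assms(1) by (simp add: vec.span_eq_iff)
  then have "d \<notin> vec.span W" using assms(2) by metis
  then show ?thesis using assms by (simp add: vec.dim_insert)
qed

lemma extend_indep:
  fixes B :: "('a::{field,finite}^'n) set"
  assumes "vec.independent B" "card B \<le> m" "m \<le> CARD('n)"
  shows "\<exists>B'. B \<subseteq> B' \<and> vec.independent B' \<and> card B' = m"
proof -
  obtain B2 where B2: "B \<subseteq> B2" "B2 \<subseteq> UNIV" "vec.independent B2" "UNIV \<subseteq> vec.span B2"
    by (rule vec.maximal_independent_subset_extend[OF subset_UNIV assms(1)])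
  have "card B2 = CARD('n)"
  proof -
    have "vec.span B2 = UNIV" using B2(4) by blast
    then have "vec.dim (vec.span B2) = CARD('n)" using dim_UNIV_vec[where 'a='a and 'n='n] by simp
    then show ?thesis using vec.dim_span_eq_card_independent[OF B2(3)] by simp
  qed
  have fin: "finite (B2 - B)" by simp
  have "card (B2 - B) = CARD('n) - card B"
    using \<open>card B2 = CARD('n)\<close> B2(1) by (simp add: card_Diff_subset)
  then have "m - card B \<le> card (B2 - B)" using assms(3) by simp
  then obtain D where D: "D \<subseteq> B2 - B" "card D = m - card B"
    using obtain_subset_with_card_n by metis
  have "card (B \<union> D) = card B + card D"
    using D(1) by (intro card_Un_disjoint) auto
  then have c: "card (B \<union> D) = m" using D(2) assms(2) by simp
  have "B \<union> D \<subseteq> B2" using D(1) B2(1) by blast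
  then have "vec.independent (B \<union> D)" using vec.independent_mono[OF B2(3)] by blast
  then show ?thesis using c by (intro exI[of _ "B \<union> D"]) simp
qed

context
  fixes k :: nat and L :: "('a::{field,finite}^'n) set set" and c :: "'a^'n \<Rightarrow> real"
  assumes CL: "\<And>S. S \<in> affine_kspaces k \<Longrightarrow> (if S \<in> L then 1 else 0) = (\<Sum>P\<in>S. c P)"
    and two: "\<And>W. W \<in> Sub k \<Longrightarrow> card (LW L W) = 2"
    and k1: "k \<ge> 1" and kn: "k + 2 \<le> CARD('n)"
begin

lemma sc:
  assumes "W \<in> Sub k" "vec.subspace X" "W \<subseteq> X"
  shows "(\<Sum>P\<in>coset u X. c P) = real (card {C\<in>LW L W. C \<subseteq> coset u X})"
proof -
  have "{C\<in>cosets W. C \<in> L \<and> C \<subseteq> coset u X} = {C\<in>LW L W. C \<subseteq> coset u X}"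
    by (auto simp: LW_def)
  moreover have "(\<Sum>P\<in>coset u X. c P) = real (card {C\<in>cosets W. C \<in> L \<and> C \<subseteq> coset u X})"
    by (rule sigma_count[OF CL assms])
  ultimately show ?thesis by simp
qed

lemma all_in:
  assumes W: "W \<in> Sub k" and X: "vec.subspace X" "W \<subseteq> X"
    and s2: "(\<Sum>P\<in>coset u X. c P) = 2" and C: "C \<in> LW L W"
  shows "C \<subseteq> coset u X"
proof -
  have "card {C\<in>LW L W. C \<subseteq> coset u X} = 2" using sc[OF W X, of u] s2 by simp
  then have "{C\<in>LW L W. C \<subseteq> coset u X} = LW L W"
    using two[OF W] by (intro card_subset_eq) auto
  then show ?thesis using C by blast
qed

lemma two_elems:
  assumes W: "W \<in> Sub k"
  obtains p r where "coset p W \<in> LW L W" "coset r W \<in> LW L W" "p - r \<notin> W"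
proof -
  have Ws: "vec.subspace W" using W by (simp add: Sub_def)
  obtain x y where xy: "LW L W = {x, y}" "x \<noteq> y"
    using two[OF W] card_2_iff[of "LW L W"] by blast
  have "x \<in> cosets W" "y \<in> cosets W" using xy(1) unfolding LW_def by auto
  then obtain p r where pr: "x = coset p W" "y = coset r W"
    unfolding cosets_def by auto
  have "p - r \<notin> W" using xy(2) pr coset_eq_iff[OF Ws, of p r] by simp
  moreover have "coset p W \<in> LW L W" "coset r W \<in> LW L W" using xy(1) pr by auto
  ultimately show ?thesis using that by blast
qed

lemma step:
  assumes W: "W \<in> Sub k" and Y: "vec.subspace Y" "W \<subseteq> Y" and s2: "(\<Sum>P\<in>coset a Y. c P) = 2"
  shows "\<exists>U p. vec.subspace U \<and> vec.dim U = k + 1 \<and> W \<subseteq> U \<and> U \<subseteq> Y \<and> (\<Sum>P\<in>coset p U. c P) = 2"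
proof -
  have Ws: "vec.subspace W" and Wd: "vec.dim W = k" using W by (auto simp: Sub_def)
  obtain p r where p: "coset p W \<in> LW L W" and r: "coset r W \<in> LW L W" and pr: "p - r \<notin> W"
    using two_elems[OF W] by blast
  have "coset p W \<subseteq> coset a Y" "coset r W \<subseteq> coset a Y"
    using all_in[OF W Y s2] p r by auto
  then have "p - a \<in> Y" "r - a \<in> Y" using coset_subset_iff[OF Ws Y] by auto
  then have "(p - a) - (r - a) \<in> Y" using vec.subspace_diff[OF Y(1)] by blast
  then have dY: "p - r \<in> Y" by simp
  define U where "U = vec.span (insert (p - r) W)"
  have Us: "vec.subspace U" unfolding U_def by simp
  have Ud: "vec.dim U = k + 1" unfolding U_def using dim_insert_subspace[OF Ws pr] Wd by simp
  have WU: "W \<subseteq> U" unfolding U_def using vec.span_superset by blast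
  have UY: "U \<subseteq> Y" unfolding U_def using Y dY by (intro vec.span_minimal) auto
  have dU: "p - r \<in> U" unfolding U_def by (simp add: vec.span_base)
  have c1: "coset p W \<subseteq> coset p U" using coset_subset_iff[OF Ws Us WU] vec.subspace_0[OF Us] by simp
  have "r - p \<in> U" using vec.subspace_neg[OF Us dU] by simp
  then have c2: "coset r W \<subseteq> coset p U" using coset_subset_iff[OF Ws Us WU] by simp
  have ne: "coset p W \<noteq> coset r W" using pr coset_eq_iff[OF Ws] by blast
  have "card {coset p W, coset r W} \<le> card {C\<in>LW L W. C \<subseteq> coset p U}"
    using p r c1 c2 by (intro card_mono) auto
  moreover have "card {C\<in>LW L W. C \<subseteq> coset p U} \<le> card (LW L W)" by (intro card_mono) auto
  ultimately have "card {C\<in>LW L W. C \<subseteq> coset p U} = 2" using ne two[OF W] by simp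
  then have "(\<Sum>P\<in>coset p U. c P) = 2" using sc[OF W Us WU, of p] by simp
  then show ?thesis using Us Ud WU UY by (intro exI[of _ U] exI[of _ p] conjI)
qed

lemma diff_in_sub:
  assumes "vec.subspace X" "a - u \<in> X" "b - u \<in> X"
  shows "a - b \<in> X"
proof -
  have "(a - u) - (b - u) \<in> X" using vec.subspace_diff[OF assms] .
  then show ?thesis by simp
qed

lemma cl2_contradiction: False
proof -
  obtain B :: "('a^'n) set" where B: "vec.independent B" "card B = k"
    using extend_indep[where 'a='a and 'n='n, of "{}" k] kn vec.independent_empty by auto
  define W0 where "W0 = vec.span B"
  have W0: "W0 \<in> Sub k" unfolding W0_def Sub_def using B vec.dim_span_eq_card_independent by auto
  have W0s: "vec.subspace W0" unfolding W0_def by simp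
  obtain p r where p: "coset p W0 \<in> LW L W0" and r: "coset r W0 \<in> LW L W0" and pr: "p - r \<notin> W0"
    using two_elems[OF W0] by blast
  define d where "d = p - r"
  have "insert d B \<subseteq> insert d B" by simp
  have dB: "d \<notin> vec.span B" using pr unfolding d_def W0_def .
  then have dnB: "d \<notin> B" using vec.span_base by blast
  have indB: "vec.independent (insert d B)" using vec.independent_insertI[OF dB B(1)] .
  have "card (insert d B) = k + 1" using dnB B(2) by simp
  then obtain B1 where B1: "insert d B \<subseteq> B1" "vec.independent B1" "card B1 = k + 2"
    using extend_indep[OF indB, of "k + 2"] kn by auto
  define Y0 where "Y0 = vec.span B1"
  have Y0s: "vec.subspace Y0" unfolding Y0_def by simp
  have Y0d: "vec.dim Y0 = k + 2" unfolding Y0_def using B1(2,3) vec.dim_span_eq_card_independent by metis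
  have W0Y0: "W0 \<subseteq> Y0" unfolding W0_def Y0_def using B1(1) vec.span_mono by blast
  have dY0: "d \<in> Y0" unfolding Y0_def using B1(1) vec.span_base by blast
  have s2: "(\<Sum>P\<in>coset p Y0. c P) = 2"
  proof -
    have c1: "coset p W0 \<subseteq> coset p Y0" using coset_subset_iff[OF W0s Y0s W0Y0] vec.subspace_0[OF Y0s] by simp
    have "r - p \<in> Y0" using vec.subspace_neg[OF Y0s dY0] unfolding d_def by simp
    then have c2: "coset r W0 \<subseteq> coset p Y0" using coset_subset_iff[OF W0s Y0s W0Y0] by simp
    have ne: "coset p W0 \<noteq> coset r W0" using pr coset_eq_iff[OF W0s] by blast
    have "card {coset p W0, coset r W0} \<le> card {C\<in>LW L W0. C \<subseteq> coset p Y0}"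
      using p r c1 c2 by (intro card_mono) auto
    moreover have "card {C\<in>LW L W0. C \<subseteq> coset p Y0} \<le> card (LW L W0)" by (intro card_mono) auto
    ultimately have "card {C\<in>LW L W0. C \<subseteq> coset p Y0} = 2" using ne two[OF W0] by simp
    then show ?thesis using sc[OF W0 Y0s W0Y0, of p] by simp
  qed
  obtain U pU where U: "vec.subspace U" "vec.dim U = k + 1" "W0 \<subseteq> U" "U \<subseteq> Y0"
      and sU: "(\<Sum>P\<in>coset pU U. c P) = 2"
    using step[OF W0 Y0s W0Y0 s2] by blast
  have "\<not> Y0 \<subseteq> U"
  proof
    assume "Y0 \<subseteq> U"
    then have "vec.dim Y0 \<le> vec.dim U" by (rule vec.dim_subset)
    then show False using Y0d U(2) by simp
  qed
  then obtain y where y: "y \<in> Y0" "y \<notin> U" by blast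
  obtain BU where BU: "BU \<subseteq> U" "vec.independent BU" "U \<subseteq> vec.span BU" "card BU = vec.dim U"
    using vec.basis_exists by blast
  have spBU: "vec.span BU = U" using BU U(1) vec.span_minimal by blast
  have "k - 1 \<le> card BU" using BU(4) U(2) by simp
  then obtain B2 where B2: "B2 \<subseteq> BU" "card B2 = k - 1"
    using obtain_subset_with_card_n by metis
  have "vec.span B2 \<subseteq> U" using vec.span_mono[OF B2(1)] spBU by simp
  then have yB2: "y \<notin> vec.span B2" using y(2) by blast
  have indB2: "vec.independent B2" using vec.independent_mono[OF BU(2) B2(1)] .
  have "y \<notin> B2" using yB2 vec.span_base by blast
  then have cardyB2: "card (insert y B2) = k" using B2(2) k1 by simp
  define W' where "W' = vec.span (insert y B2)"
  have W': "W' \<in> Sub k" unfolding W'_def Sub_def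
    using vec.independent_insertI[OF yB2 indB2] vec.dim_span_eq_card_independent cardyB2 by auto
  have W's: "vec.subspace W'" unfolding W'_def by simp
  have W'Y0: "W' \<subseteq> Y0" unfolding W'_def
    using y(1) B2(1) BU(1) U(4) Y0s by (intro vec.span_minimal) auto
  have yW': "y \<in> W'" unfolding W'_def by (simp add: vec.span_base)
  obtain U' pU' where U': "vec.subspace U'" "vec.dim U' = k + 1" "W' \<subseteq> U'" "U' \<subseteq> Y0"
      and sU': "(\<Sum>P\<in>coset pU' U'. c P) = 2"
    using step[OF W' Y0s W'Y0 s2] by blast
  have UU': "U \<noteq> U'" using yW' U'(3) y(2) by blast
  have sumsub: "{x + y |x y. x \<in> U \<and> y \<in> U'} \<subseteq> Y0"
    using U(4) U'(4) vec.subspace_add[OF Y0s] by blast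
  have "vec.dim {x + y |x y. x \<in> U \<and> y \<in> U'} \<le> k + 2"
    using vec.dim_subset[OF sumsub] Y0d by simp
  then have ge: "vec.dim (U \<inter> U') \<ge> k" using vec.dim_sums_Int[OF U(1) U'(1)] U(2) U'(2) by simp
  have Is: "vec.subspace (U \<inter> U')" using vec.subspace_inter[OF U(1) U'(1)] .
  have le: "vec.dim (U \<inter> U') \<le> k + 1" using vec.dim_subset[of "U \<inter> U'" U] U(2) by simp
  have "vec.dim (U \<inter> U') \<noteq> k + 1"
  proof
    assume h: "vec.dim (U \<inter> U') = k + 1"
    have "U \<inter> U' = U" using vec.subspace_dim_equal[OF Is U(1)] h U(2) by simp
    then have "U \<subseteq> U'" by blast
    then have "U = U'" using vec.subspace_dim_equal[OF U(1) U'(1)] U(2) U'(2) by simp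
    then show False using UU' by simp
  qed
  then have "vec.dim (U \<inter> U') = k" using ge le by simp
  then have W'': "U \<inter> U' \<in> Sub k" using Is by (simp add: Sub_def)
  obtain z1 z2 where z1: "coset z1 (U \<inter> U') \<in> LW L (U \<inter> U')" and z2: "coset z2 (U \<inter> U') \<in> LW L (U \<inter> U')"
      and z12: "z1 - z2 \<notin> U \<inter> U'"
    using two_elems[OF W''] by blast
  have "coset z1 (U \<inter> U') \<subseteq> coset pU U" "coset z2 (U \<inter> U') \<subseteq> coset pU U"
    using all_in[OF W'' U(1) _ sU] z1 z2 by auto
  then have "z1 - pU \<in> U" "z2 - pU \<in> U" using coset_subset_iff[OF Is U(1)] by auto
  then have a: "z1 - z2 \<in> U" using diff_in_sub[OF U(1)] by blast
  have "coset z1 (U \<inter> U') \<subseteq> coset pU' U'" "coset z2 (U \<inter> U') \<subseteq> coset pU' U'"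
    using all_in[OF W'' U'(1) _ sU'] z1 z2 by auto
  then have "z1 - pU' \<in> U'" "z2 - pU' \<in> U'" using coset_subset_iff[OF Is U'(1)] by auto
  then have b: "z1 - z2 \<in> U'" using diff_in_sub[OF U'(1)] by blast
  show False using a b z12 by blast
qed

end


theorem corollary6p16:
  fixes k :: nat
  assumes "k \<ge> 1" and "CARD('n::finite) \<ge> k + 2"
  shows "\<not> (\<exists>L :: ('a::{field,finite} ^ 'n) set set.
             cameron_liebler_kset k L \<and> cl_parameter k L = 2)"
proof
  assume "\<exists>L :: ('a::{field,finite} ^ 'n) set set. cameron_liebler_kset k L \<and> cl_parameter k L = 2"
  then obtain L :: "('a::{field,finite} ^ 'n) set set"
    where CLk: "cameron_liebler_kset k L" and par: "cl_parameter k L = 2" by blast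
  obtain c :: "'a^'n \<Rightarrow> real" where Lsub: "L \<subseteq> affine_kspaces k"
    and cc: "\<forall>S \<in> affine_kspaces k. (if S \<in> L then 1 else 0) = (\<Sum>P\<in>UNIV. c P * incid P S)"
    using CLk unfolding cameron_liebler_kset_def by blast
  have CLs: "\<And>S. S \<in> affine_kspaces k \<Longrightarrow> (if S \<in> L then 1 else 0) = (\<Sum>P\<in>S. c P)"
    using cc sum_incid by metis
  have kn: "k + 2 \<le> CARD('n)" using assms(2) by simp
  have G: "real (card (Sub k :: ('a^'n) set set)) = gauss_binom CARD('a) CARD('n) k"
    using card_Sub_gauss[where 'a='a and 'n='n, of k] kn by simp
  obtain B :: "('a^'n) set" where B: "vec.independent B" "card B = k"
    using extend_indep[where 'a='a and 'n='n, of "{}" k] kn vec.independent_empty by auto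
  have "vec.span B \<in> Sub k" unfolding Sub_def using B vec.dim_span_eq_card_independent by auto
  then have "card (Sub k :: ('a^'n) set set) > 0" by (auto simp: card_gt_0_iff)
  then have Gpos: "gauss_binom CARD('a) CARD('n) k > 0" using G by simp
  have cL: "real (card L) = (\<Sum>P\<in>UNIV. c P) * gauss_binom CARD('a) CARD('n) k"
    using card_L[OF CLs Lsub] G by simp
  have "real (card L) / gauss_binom CARD('a) CARD('n) k = 2"
    using par unfolding cl_parameter_def .
  then have x2: "(\<Sum>P\<in>UNIV. c P) = 2" using cL Gpos by simp
  have two: "\<And>W. W \<in> Sub k \<Longrightarrow> card (LW L W) = 2"
  proof -
    fix W :: "('a^'n) set" assume "W \<in> Sub k"
    then have "real (card (LW L W)) = 2" using card_LW[OF CLs] x2 by simp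
    then show "card (LW L W) = 2" by simp
  qed
  show False by (rule cl2_contradiction[OF CLs two assms(1) kn])
qed

end
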